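(* Let $G$ be a finite simple graph, $L \subseteq V(G)$, $R = V(G) \setminus L$, and $v \in L$. Let $M_v$ be a matching in $G$ each of whose edges joins a vertex of $N_R(v)$ to a vertex of $T^2_L(v)$. Then $\mathrm{pp}^2_L(v) \geq |N_L(v)| + |M_v|$, and equality holds if $M_v$ is a maximum matching among all such matchings (i.e., a maximum matching of the bipartite graph with sides $N_R(v)$ and $T^2_L(v)$ and all edges of $G$ between them).
   Context: All graphs are finite and simple. For a partition $V(G) = L \cup R$ and a vertex $v$, $N_L(v) = N(v) \cap L$ and $N_R(v) = N(v) \cap R$, and $T^2_L(v) = \{x \in L \setminus (N(v) \cup \{v\}) : N_R(x) \cap N(v) \neq \emptyset\}$, i.e. the vertices of $L$ other than $v$, not adjacent to $v$, reachable from $v$ by a path of length two whose middle vertex lies in $R$. For a vertex $v$ and a set $X \subseteq V(G)$, an $(r,X)$-path packing rooted at $v$ is a family $\mathcal P$ of paths such that: every path has length at least $1$ and at most $r$; every path starts at $v$ and ends at a vertex of $X \setminus \{v\}$; the paths are pairwise vertex-disjoint except for the common start vertex $v$; and no interior vertex of any path lies in $X$. Let $\mathrm{pp}^r_X(v)$ denote the maximum size of an $(r,X)$-path packing rooted at $v$. *)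

theory Defs
  imports Main
begin

definition simple_graph :: "'a set \<Rightarrow> ('a \<Rightarrow> 'a \<Rightarrow> bool) \<Rightarrow> bool" where
  "simple_graph V E \<longleftrightarrow> finite V \<and> (\<forall>x y. E x y \<longrightarrow> E y x)
     \<and> (\<forall>x. \<not> E x x) \<and> (\<forall>x y. E x y \<longrightarrow> x \<in> V \<and> y \<in> V)"

definition nbhd :: "('a \<Rightarrow> 'a \<Rightarrow> bool) \<Rightarrow> 'a \<Rightarrow> 'a set" where
  "nbhd E v = {x. E v x}"

definition nbhd_in :: "('a \<Rightarrow> 'a \<Rightarrow> bool) \<Rightarrow> 'a set \<Rightarrow> 'a \<Rightarrow> 'a set" where
  "nbhd_in E S v = nbhd E v \<inter> S"

definition T2 :: "'a set \<Rightarrow> ('a \<Rightarrow> 'a \<Rightarrow> bool) \<Rightarrow> 'a set \<Rightarrow> 'a \<Rightarrow> 'a set" where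
  "T2 V E L v = {x \<in> L - (nbhd E v \<union> {v}). nbhd_in E (V - L) x \<inter> nbhd E v \<noteq> {}}"

text \<open>A path is a nonempty list of distinct vertices, consecutive ones adjacent;
its length is the number of edges, i.e. length of the list minus one.\<close>
definition is_path :: "'a set \<Rightarrow> ('a \<Rightarrow> 'a \<Rightarrow> bool) \<Rightarrow> 'a list \<Rightarrow> bool" where
  "is_path V E p \<longleftrightarrow> p \<noteq> [] \<and> distinct p \<and> set p \<subseteq> V
     \<and> (\<forall>i. Suc i < length p \<longrightarrow> E (p ! i) (p ! Suc i))"

definition path_packing :: "'a set \<Rightarrow> ('a \<Rightarrow> 'a \<Rightarrow> bool) \<Rightarrow> nat \<Rightarrow> 'a set \<Rightarrow> 'a \<Rightarrow> 'a list set \<Rightarrow> bool" where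
  "path_packing V E r X v P \<longleftrightarrow>
     (\<forall>p \<in> P. is_path V E p \<and> 1 \<le> length p - 1 \<and> length p - 1 \<le> r
        \<and> hd p = v \<and> last p \<in> X - {v}
        \<and> set (butlast (tl p)) \<inter> X = {})
   \<and> (\<forall>p \<in> P. \<forall>q \<in> P. p \<noteq> q \<longrightarrow> set p \<inter> set q \<subseteq> {v})"

definition pp :: "'a set \<Rightarrow> ('a \<Rightarrow> 'a \<Rightarrow> bool) \<Rightarrow> nat \<Rightarrow> 'a set \<Rightarrow> 'a \<Rightarrow> nat" where
  "pp V E r X v = Max {card P | P. path_packing V E r X v P}"

definition matching_between :: "('a \<Rightarrow> 'a \<Rightarrow> bool) \<Rightarrow> 'a set \<Rightarrow> 'a set \<Rightarrow> 'a set set \<Rightarrow> bool" where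
  "matching_between E A B M \<longleftrightarrow>
     (\<forall>e \<in> M. \<exists>x \<in> A. \<exists>y \<in> B. E x y \<and> e = {x, y})
   \<and> (\<forall>e \<in> M. \<forall>f \<in> M. e \<noteq> f \<longrightarrow> e \<inter> f = {})"

end

theory Submission
  imports Defs
begin

lemma path_shape:
  assumes "is_path V E p" "1 \<le> length p - 1" "length p - 1 \<le> 2" "hd p = v"
    "last p \<in> L - {v}" "set (butlast (tl p)) \<inter> L = {}"
  shows "(\<exists>x. p = [v,x] \<and> E v x \<and> x \<in> L - {v} \<and> x \<in> V)
       \<or> (\<exists>y x. p = [v,y,x] \<and> E v y \<and> E y x \<and> y \<notin> L \<and> y \<in> V \<and> x \<in> L - {v} \<and> x \<in> V
               \<and> y \<noteq> v \<and> y \<noteq> x)"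
proof -
  have ip: "p \<noteq> []" "distinct p" "set p \<subseteq> V" "\<And>i. Suc i < length p \<Longrightarrow> E (p ! i) (p ! Suc i)"
    using assms(1) unfolding is_path_def by auto
  have "length p = 2 \<or> length p = 3" using assms(2,3) by linarith
  then show ?thesis
  proof
    assume "length p = 2"
    then obtain a b where p: "p = [a,b]"
      by (auto simp: length_Suc_conv numeral_2_eq_2)
    have "E a b" using ip(4)[of 0] p by simp
    moreover have "a = v" using p assms(4) by simp
    moreover have "b \<in> L - {v}" using p assms(5) by simp
    moreover have "b \<in> V" using p ip(3) by simp
    ultimately show ?thesis using p by blast
  next
    assume "length p = 3"
    then obtain a b c where p: "p = [a,b,c]"
      by (auto simp: length_Suc_conv numeral_3_eq_3)
    have "E a b" using ip(4)[of 0] p by simp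
    moreover have "E b c" using ip(4)[of 1] p by simp
    moreover have "a = v" using p assms(4) by simp
    moreover have "c \<in> L - {v}" using p assms(5) by simp
    moreover have "b \<notin> L" using p assms(6) by simp
    moreover have "b \<in> V" "c \<in> V" using p ip(3) by simp_all
    moreover have "b \<noteq> a" "b \<noteq> c" using p ip(2) by auto
    ultimately show ?thesis using p by blast
  qed
qed


lemma is_path2: "E a b \<Longrightarrow> a \<noteq> b \<Longrightarrow> a \<in> V \<Longrightarrow> b \<in> V \<Longrightarrow> is_path V E [a,b]"
  unfolding is_path_def by (auto simp: nth_Cons' less_Suc_eq)

lemma is_path3: "E a b \<Longrightarrow> E b c \<Longrightarrow> distinct [a,b,c] \<Longrightarrow> a \<in> V \<Longrightarrow> b \<in> V \<Longrightarrow> c \<in> V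
   \<Longrightarrow> is_path V E [a,b,c]"
  unfolding is_path_def by (auto simp: nth_Cons' less_Suc_eq numeral_3_eq_3)

lemma disj_aux: "(set p - {v}) \<inter> (set q - {v}) = {} \<Longrightarrow> set p \<inter> set q \<subseteq> {v}"
  by blast

context
  fixes V :: "'a set" and E :: "'a \<Rightarrow> 'a \<Rightarrow> bool" and L :: "'a set" and v :: 'a
  assumes G: "simple_graph V E" and LV: "L \<subseteq> V" and vL: "v \<in> L"
begin

lemma finV: "finite V" using G unfolding simple_graph_def by blast
lemma symE: "E x y \<Longrightarrow> E y x" using G unfolding simple_graph_def by blast
lemma irrE: "\<not> E x x" using G unfolding simple_graph_def by blast
lemma inVE: "E x y \<Longrightarrow> x \<in> V \<and> y \<in> V" using G unfolding simple_graph_def by blast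

lemma pack_elem:
  assumes "path_packing V E 2 L v P" "p \<in> P"
  shows "(\<exists>x. p = [v,x] \<and> E v x \<and> x \<in> L - {v} \<and> x \<in> V)
       \<or> (\<exists>y x. p = [v,y,x] \<and> E v y \<and> E y x \<and> y \<notin> L \<and> y \<in> V \<and> x \<in> L - {v} \<and> x \<in> V
               \<and> y \<noteq> v \<and> y \<noteq> x)"
  using assms unfolding path_packing_def by (intro path_shape) auto

lemma pack_disj:
  assumes "path_packing V E 2 L v P" "p \<in> P" "q \<in> P" "p \<noteq> q"
  shows "set p \<inter> set q \<subseteq> {v}"
  using assms unfolding path_packing_def by blast

lemma pack_last:
  assumes "path_packing V E 2 L v P" "p \<in> P"
  shows "last p \<in> set p - {v}" "last p \<in> V"
  using pack_elem[OF assms] by auto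

lemma pack_inj_last:
  assumes "path_packing V E 2 L v P"
  shows "inj_on last P"
proof (rule inj_onI)
  fix p q assume pq: "p \<in> P" "q \<in> P" "last p = last q"
  show "p = q"
  proof (rule ccontr)
    assume "p \<noteq> q"
    then have "set p \<inter> set q \<subseteq> {v}" using pack_disj assms pq by blast
    moreover have "last p \<in> set p - {v}" "last q \<in> set q - {v}"
      using pack_last(1) assms pq by blast+
    ultimately show False using pq(3) by auto
  qed
qed

lemma pack_finite:
  assumes "path_packing V E 2 L v P"
  shows "finite P" "card P \<le> card V"
proof -
  have sub: "last ` P \<subseteq> V" using pack_last(2)[OF assms] by blast
  then have "finite (last ` P)" using finV finite_subset by blast
  then show "finite P" using pack_inj_last[OF assms] finite_imageD by blast
  show "card P \<le> card V"
    using card_inj_on_le[OF pack_inj_last[OF assms] sub finV] .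
qed

lemma pp_set_finite: "finite {card P | P. path_packing V E 2 L v P}"
proof -
  have "{card P | P. path_packing V E 2 L v P} \<subseteq> {..card V}"
    using pack_finite(2) by auto
  then show ?thesis using finite_subset by blast
qed

lemma upper:
  assumes "path_packing V E 2 L v P"
  shows "\<exists>M'. matching_between E (nbhd_in E (V - L) v) (T2 V E L v) M'
            \<and> card P \<le> card (nbhd_in E L v) + card M'"
proof -
  define A where "A = nbhd_in E (V - L) v"
  define B where "B = T2 V E L v"
  define NL where "NL = nbhd_in E L v"
  define h where "h = (\<lambda>p::'a list. {p!1, p!2})"
  define M' where "M' = h ` {p\<in>P. \<not> E v (last p)}"
  define g where "g = (\<lambda>p. if E v (last p) then Inl (last p) else Inr (h p))"
  have shape2: "\<exists>y x. p = [v,y,x] \<and> y \<in> A \<and> x \<in> B \<and> E y x \<and> h p = {y,x}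
                    \<and> y \<noteq> v \<and> x \<noteq> v"
    if "p \<in> P" "\<not> E v (last p)" for p
  proof -
    from pack_elem[OF assms that(1)] that(2) obtain y x where
      p: "p = [v,y,x]" "E v y" "E y x" "y \<notin> L" "y \<in> V" "x \<in> L - {v}" "x \<in> V" "y \<noteq> v" "y \<noteq> x"
      by auto
    have "\<not> E v x" using that(2) p(1) by simp
    moreover have "E x y" using symE p(3) .
    ultimately have "x \<in> B" using p unfolding B_def T2_def nbhd_in_def nbhd_def by auto
    moreover have "y \<in> A" using p unfolding A_def nbhd_in_def nbhd_def by auto
    ultimately show ?thesis using p unfolding h_def by auto
  qed
  have hsub: "h p \<subseteq> set p - {v}" if "p \<in> P" "\<not> E v (last p)" for p
    using shape2[OF that] by auto
  have match: "matching_between E A B M'"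
    unfolding matching_between_def
  proof (intro conjI ballI impI)
    fix e assume "e \<in> M'"
    then obtain p where "p \<in> P" "\<not> E v (last p)" "e = h p" unfolding M'_def by blast
    then show "\<exists>x\<in>A. \<exists>y\<in>B. E x y \<and> e = {x, y}" using shape2 by blast
  next
    fix e f assume ef: "e \<in> M'" "f \<in> M'" "e \<noteq> f"
    then obtain p q where p: "p \<in> P" "\<not> E v (last p)" "e = h p"
      and q: "q \<in> P" "\<not> E v (last q)" "f = h q" unfolding M'_def by blast
    then have "p \<noteq> q" using ef by blast
    then have "set p \<inter> set q \<subseteq> {v}" using pack_disj assms p q by blast
    then show "e \<inter> f = {}" using hsub[OF p(1,2)] hsub[OF q(1,2)] p(3) q(3) by blast
  qed
  have finP: "finite P" using pack_finite(1)[OF assms] .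
  have finNL: "finite NL" unfolding NL_def nbhd_in_def using LV finV finite_subset by blast
  have finM': "finite M'" unfolding M'_def using finP by simp
  have gsub: "g ` P \<subseteq> NL <+> M'"
  proof
    fix z assume "z \<in> g ` P"
    then obtain p where p: "p \<in> P" "z = g p" by blast
    show "z \<in> NL <+> M'"
    proof (cases "E v (last p)")
      case True
      then have "last p \<in> L" using pack_elem[OF assms p(1)] by auto
      then show ?thesis using True p unfolding g_def NL_def nbhd_in_def nbhd_def by auto
    next
      case False
      then show ?thesis using p unfolding g_def M'_def by auto
    qed
  qed
  have ginj: "inj_on g P"
  proof (rule inj_onI)
    fix p q assume pq: "p \<in> P" "q \<in> P" "g p = g q"
    show "p = q"
    proof (cases "E v (last p)")
      case True
      have gp: "g p = Inl (last p)" using True unfolding g_def by simp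
      have gq: "E v (last q)"
      proof (rule ccontr)
        assume "\<not> E v (last q)"
        then have "g q = Inr (h q)" unfolding g_def by simp
        then show False using gp pq(3) by simp
      qed
      then have "g q = Inl (last q)" unfolding g_def by simp
      then have "E v (last q) \<and> last p = last q" using gp pq(3) gq by (metis sum.inject(1))
      then show ?thesis using inj_onD[OF pack_inj_last[OF assms]] pq(1,2) by blast
    next
      case False
      have gp: "g p = Inr (h p)" using False unfolding g_def by simp
      have nq: "\<not> E v (last q)"
      proof
        assume "E v (last q)"
        then have "g q = Inl (last q)" unfolding g_def by simp
        then show False using gp pq(3) by simp
      qed
      then have "g q = Inr (h q)" unfolding g_def by simp
      then have hh: "h p = h q" using gp pq(3) by (metis sum.inject(2))
      show ?thesis
      proof (rule ccontr)
        assume "p \<noteq> q"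
        then have "set p \<inter> set q \<subseteq> {v}" using pack_disj assms pq by blast
        moreover obtain y x where "p = [v,y,x]" "h p = {y,x}" "x \<noteq> v"
          using shape2[OF pq(1) False] by blast
        ultimately show False using hsub[OF pq(2) nq] hh by auto
      qed
    qed
  qed
  have "card P \<le> card (NL <+> M')"
    using card_inj_on_le[OF ginj gsub] finNL finM' by simp
  also have "\<dots> = card NL + card M'" using card_Plus[OF finNL finM'] .
  finally show ?thesis using match unfolding A_def B_def NL_def by blast
qed

lemma lower:
  assumes M: "matching_between E (nbhd_in E (V - L) v) (T2 V E L v) M"
  shows "\<exists>P. path_packing V E 2 L v P \<and> card P = card (nbhd_in E L v) + card M"
proof -
  define A where "A = nbhd_in E (V - L) v"
  define B where "B = T2 V E L v"
  define NL where "NL = nbhd_in E L v"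
  define f where "f = (\<lambda>e. [v, the_elem (e \<inter> A), the_elem (e \<inter> B)])"
  have A1: "A \<subseteq> V - L" unfolding A_def nbhd_in_def by blast
  have B1: "B \<subseteq> L" unfolding B_def T2_def by blast
  have AB: "A \<inter> B = {}" using A1 B1 by blast
  have fM: "\<exists>y x. y \<in> A \<and> x \<in> B \<and> E y x \<and> e = {y,x} \<and> f e = [v,y,x]" if eM: "e \<in> M" for e
  proof -
    obtain y x where yx: "y \<in> A" "x \<in> B" "E y x" "e = {y,x}"
    proof -
      have "\<forall>e\<in>M. \<exists>y\<in>A. \<exists>x\<in>B. E y x \<and> e = {y, x}"
        using M unfolding matching_between_def A_def B_def by (rule conjunct1)
      then show ?thesis using that eM by meson
    qed
    have "y \<notin> B" "x \<notin> A" using yx(1,2) AB by blast+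
    then have "e \<inter> A = {y}" "e \<inter> B = {x}" using yx(1,2,4) by blast+
    then have "f e = [v,y,x]" unfolding f_def by simp
    then show ?thesis using yx by blast
  qed
  have Aprop: "y \<in> A \<Longrightarrow> E v y \<and> y \<in> V \<and> y \<notin> L \<and> y \<noteq> v" for y
    using vL unfolding A_def nbhd_in_def nbhd_def by auto
  have Bprop: "x \<in> B \<Longrightarrow> \<not> E v x \<and> x \<in> L \<and> x \<noteq> v \<and> x \<in> V" for x
    using LV unfolding B_def T2_def nbhd_in_def nbhd_def by auto
  have NLprop: "x \<in> NL \<Longrightarrow> E v x \<and> x \<in> L \<and> x \<noteq> v \<and> x \<in> V" for x
    using LV irrE unfolding NL_def nbhd_in_def nbhd_def by auto
  have vV: "v \<in> V" using vL LV by blast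
  define P0 where "P0 = (\<lambda>x. [v,x]) ` NL \<union> f ` M"
  have finNL: "finite NL" unfolding NL_def nbhd_in_def using LV finV finite_subset by blast
  have "M \<subseteq> Pow V"
  proof
    fix e assume "e \<in> M"
    then obtain y x where "E y x" "e = {y,x}" using fM by blast
    then show "e \<in> Pow V" using inVE by blast
  qed
  then have finM: "finite M" using finV finite_subset by (metis finite_Pow_iff)
  have injf: "inj_on f M"
  proof (rule inj_onI)
    fix e e' assume "e \<in> M" "e' \<in> M" "f e = f e'"
    then obtain y x y' x' where "e = {y,x}" "f e = [v,y,x]" "e' = {y',x'}" "f e' = [v,y',x']"
      using fM by meson
    then show "e = e'" using \<open>f e = f e'\<close> by simp
  qed
  have disj: "(\<lambda>x. [v,x]) ` NL \<inter> f ` M = {}"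
  proof -
    have "[v,x] \<noteq> f e" for e x unfolding f_def by simp
    then show ?thesis by blast
  qed
  have card0: "card P0 = card NL + card M"
    unfolding P0_def
    by (subst card_Un_disjoint) (use finNL finM disj injf in \<open>auto simp: card_image inj_on_def\<close>)
  have endp: "\<exists>S. set p - {v} = S \<and> ((\<exists>x \<in> NL. p = [v,x] \<and> S = {x}) \<or> (\<exists>e\<in>M. p = f e \<and> S = e))"
    if "p \<in> P0" for p
  proof -
    from that consider (a) x where "x \<in> NL" "p = [v,x]" | (b) e where "e \<in> M" "p = f e"
      unfolding P0_def by blast
    then show ?thesis
    proof cases
      case a then show ?thesis using NLprop by auto
    next
      case b
      then obtain y x where yx: "y \<in> A" "x \<in> B" "e = {y,x}" "f e = [v,y,x]" using fM by blast
      have "y \<noteq> v" "x \<noteq> v" using Aprop[OF yx(1)] Bprop[OF yx(2)] by auto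
      then have "set p - {v} = e" using b(2) yx(3,4) by auto
      then show ?thesis using b by blast
    qed
  qed
  have pack: "path_packing V E 2 L v P0"
    unfolding path_packing_def
  proof (rule conjI; intro ballI impI)
    fix p assume "p \<in> P0"
    then consider (a) x where "x \<in> NL" "p = [v,x]" | (b) e where "e \<in> M" "p = f e"
      unfolding P0_def by blast
    then show "is_path V E p \<and> 1 \<le> length p - 1 \<and> length p - 1 \<le> 2 \<and> hd p = v \<and>
      last p \<in> L - {v} \<and> set (butlast (tl p)) \<inter> L = {}"
    proof cases
      case a
      then have "is_path V E p" using NLprop[OF a(1)] vV is_path2 by metis
      then show ?thesis using a NLprop[OF a(1)] by simp
    next
      case b
      then obtain y x where yx: "y \<in> A" "x \<in> B" "E y x" "p = [v,y,x]" using fM by blast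
      have "is_path V E p" using yx Aprop[OF yx(1)] Bprop[OF yx(2)] vV
        by (intro is_path3[of E v y x V, folded yx(4)]) auto
      then show ?thesis using yx Aprop[OF yx(1)] Bprop[OF yx(2)] by simp
    qed
  next
    fix p q assume pq: "p \<in> P0" "q \<in> P0" "p \<noteq> q"
    obtain S where S: "set p - {v} = S" "(\<exists>x \<in> NL. p = [v,x] \<and> S = {x}) \<or> (\<exists>e\<in>M. p = f e \<and> S = e)"
      using endp[OF pq(1)] by blast
    obtain T where T: "set q - {v} = T" "(\<exists>x \<in> NL. q = [v,x] \<and> T = {x}) \<or> (\<exists>e\<in>M. q = f e \<and> T = e)"
      using endp[OF pq(2)] by blast
    have "S \<inter> T = {}"
    proof -
      { fix x x' assume "x \<in> NL" "x' \<in> NL" "p = [v,x]" "q = [v,x']"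
        then have "S \<inter> T = {}" using S T pq(3) by auto }
      moreover
      { fix x e assume as: "x \<in> NL" "e \<in> M" "S = {x}" "T = e"
        obtain y x' where "y \<in> A" "x' \<in> B" "e = {y,x'}" using fM[OF as(2)] by blast
        then have "S \<inter> T = {}" using as Aprop[of y] Bprop[of x'] NLprop[of x] by auto }
      moreover
      { fix x e assume as: "x \<in> NL" "e \<in> M" "T = {x}" "S = e"
        obtain y x' where "y \<in> A" "x' \<in> B" "e = {y,x'}" using fM[OF as(2)] by blast
        then have "S \<inter> T = {}" using as Aprop[of y] Bprop[of x'] NLprop[of x] by auto }
      moreover
      { fix e e' assume "e \<in> M" "e' \<in> M" "p = f e" "q = f e'" "S = e" "T = e'"
        then have "e \<noteq> e'" using pq(3) by blast
        then have "S \<inter> T = {}" using M \<open>e \<in> M\<close> \<open>e' \<in> M\<close> \<open>S = e\<close> \<open>T = e'\<close>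
          unfolding matching_between_def by blast }
      ultimately show ?thesis using S(2) T(2) by blast
    qed
    then show "set p \<inter> set q \<subseteq> {v}" using S(1) T(1) disj_aux by metis
  qed
  show ?thesis using pack card0 unfolding NL_def by blast
qed

end

theorem mainTheorem2:
  fixes V :: "'a set" and E :: "'a \<Rightarrow> 'a \<Rightarrow> bool" and L :: "'a set" and v :: 'a
    and M :: "'a set set"
  assumes "simple_graph V E"
    and "L \<subseteq> V"
    and "v \<in> L"
    and "matching_between E (nbhd_in E (V - L) v) (T2 V E L v) M"
  shows "pp V E 2 L v \<ge> card (nbhd_in E L v) + card M
     \<and> ((\<forall>M'. matching_between E (nbhd_in E (V - L) v) (T2 V E L v) M' \<longrightarrow> card M' \<le> card M)
         \<longrightarrow> pp V E 2 L v = card (nbhd_in E L v) + card M)"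
proof -
  let ?S = "{card P | P. path_packing V E 2 L v P}"
  have fin: "finite ?S" using pp_set_finite[OF assms(1-3)] .
  obtain P0 where P0: "path_packing V E 2 L v P0" "card P0 = card (nbhd_in E L v) + card M"
    using lower[OF assms(1-4)] by blast
  have ge: "pp V E 2 L v \<ge> card (nbhd_in E L v) + card M"
  proof -
    have "card P0 \<in> ?S" using P0(1) by auto
    then have "card P0 \<le> Max ?S" using Max_ge[OF fin] by blast
    then show ?thesis unfolding pp_def using P0(2) by simp
  qed
  moreover
  { assume mx: "\<forall>M'. matching_between E (nbhd_in E (V - L) v) (T2 V E L v) M' \<longrightarrow> card M' \<le> card M"
    have "?S \<noteq> {}" using P0(1) by auto
    then have "Max ?S \<in> ?S" using fin Max_in by blast
    then obtain P where P: "path_packing V E 2 L v P" "pp V E 2 L v = card P"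
      unfolding pp_def by auto
    obtain M' where "matching_between E (nbhd_in E (V - L) v) (T2 V E L v) M'"
      "card P \<le> card (nbhd_in E L v) + card M'"
      using upper[OF assms(1-3) P(1)] by blast
    then have "pp V E 2 L v \<le> card (nbhd_in E L v) + card M" using mx P(2) by fastforce
    then have "pp V E 2 L v = card (nbhd_in E L v) + card M" using ge by linarith }
  ultimately show ?thesis by blast
qed

end
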